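(* Let $p,q\geq 2$ be relatively prime integers, let $k\geq 2$ and $t>0$ be integers, and let $w_1,w_2\in A_{pq}^k$. Then (1) if $\mathrm{int}(w_1)<q^t$ then $\mathrm{int}(G_{p,q}(w_1))<q^{t-1}$; and (2) if $\mathrm{int}(w_2)\equiv\mathrm{int}(w_1)+q^t\pmod{(pq)^k}$ then $\mathrm{int}(G_{p,q}(w_2))\equiv\mathrm{int}(G_{p,q}(w_1))+q^{t-1}\pmod{(pq)^{k-1}}$.
   Context: For an integer $n>1$, $A_n=\{0,\dots,n-1\}$, and $A_n^k$ is the set of words of length $k$. Define $g_{p,q}:A_{pq}\times A_{pq}\to A_{pq}$ by writing $x=x_1q+x_0$, $y=y_1q+y_0$ with $x_0,y_0\in A_q$, $x_1,y_1\in A_p$ (uniquely), and $g_{p,q}(x,y)=x_0p+y_1$. For a word $w=w(1)\cdots w(m)$ with $m\geq2$, $G_{p,q}(w)=u(1)\cdots u(m-1)$ where $u(i)=g_{p,q}(w(i),w(i+1))$. For a nonempty word $w=w(1)\cdots w(m)$ over $A_{pq}$, $\mathrm{int}(w)=\sum_{i=0}^{m-1}w(m-i)(pq)^i$. *)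

theory Defs
  imports Main "HOL-Number_Theory.Cong"
begin

definition word_over :: "nat \<Rightarrow> nat \<Rightarrow> nat list \<Rightarrow> bool" where
  "word_over n k w \<longleftrightarrow> length w = k \<and> (\<forall>a\<in>set w. a < n)"

definition gpq :: "nat \<Rightarrow> nat \<Rightarrow> nat \<Rightarrow> nat \<Rightarrow> nat" where
  "gpq p q x y = (x mod q) * p + (y div q)"

definition Gpq :: "nat \<Rightarrow> nat \<Rightarrow> nat list \<Rightarrow> nat list" where
  "Gpq p q w = map (\<lambda>i. gpq p q (w ! i) (w ! (i + 1))) [0..<length w - 1]"

(* int(w) = sum_{i=0}^{m-1} w(m-i) (pq)^i  (1-indexed w; list index m-1-i) *)
definition wint :: "nat \<Rightarrow> nat \<Rightarrow> nat list \<Rightarrow> nat" where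
  "wint p q w = (\<Sum>i<length w. (w ! (length w - 1 - i)) * (p * q) ^ i)"

end

theory Submission
  imports Defs
begin

lemma wint_Cons: "wint p q (a # w) = a * (p*q) ^ length w + wint p q w"
proof -
  have "(\<Sum>i<length w. (a # w) ! (length w - i) * (p * q) ^ i)
      = (\<Sum>i<length w. w ! (length w - 1 - i) * (p * q) ^ i)"
  proof (rule sum.cong)
    fix i assume "i \<in> {..<length w}"
    then have "length w - i = Suc (length w - 1 - i)" by auto
    then show "(a # w) ! (length w - i) * (p * q) ^ i = w ! (length w - 1 - i) * (p * q) ^ i"
      by simp
  qed simp
  then show ?thesis unfolding wint_def by simp
qed

lemma wint_Nil: "wint p q [] = 0" unfolding wint_def by simp

lemma Gpq_Cons2: "Gpq p q (a # b # v) = gpq p q a b # Gpq p q (b # v)"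
  unfolding Gpq_def by (simp add: upt_conv_Cons map_Suc_upt[symmetric] del: upt_Suc)

lemma Gpq_single: "Gpq p q [a] = []" unfolding Gpq_def by simp

lemma length_Gpq: "length (Gpq p q w) = length w - 1" unfolding Gpq_def by simp

lemma key: "w \<noteq> [] \<Longrightarrow> q * wint p q (Gpq p q w) + last w mod q
   + (hd w div q) * q * (p*q)^(length w - 1) = wint p q w"
proof (induction w)
  case Nil then show ?case by simp
next
  case (Cons a v)
  show ?case
  proof (cases v)
    case Nil
    then show ?thesis by (simp add: Gpq_single wint_Nil wint_Cons)
  next
    case (Cons b v')
    have IH: "q * wint p q (Gpq p q v) + last v mod q
       + (b div q) * q * (p*q)^(length v - 1) = wint p q v"
      using Cons.IH Cons by simp
    have lv: "length v = Suc (length v')" using Cons by simp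
    have "q * wint p q (Gpq p q (a # v)) = q * (((a mod q) * p + b div q) * (p*q)^(length v - 1))
        + q * wint p q (Gpq p q v)"
      using Cons by (simp add: Gpq_Cons2 wint_Cons length_Gpq gpq_def algebra_simps)
    also have "q * (((a mod q) * p + b div q) * (p*q)^(length v - 1))
        = (a mod q) * (p*q)^(length v) + (b div q) * q * (p*q)^(length v - 1)"
      using lv by (simp add: algebra_simps)
    finally have e: "q * wint p q (Gpq p q (a # v)) = (a mod q) * (p*q)^(length v) + (b div q) * q * (p*q)^(length v - 1)
        + q * wint p q (Gpq p q v)" .
    have a: "a = a mod q + (a div q) * q" by simp
    have "wint p q (a # v) = (a mod q + (a div q) * q) * (p*q)^length v + wint p q v"
      using wint_Cons[of p q a v] a by simp
    then have w: "wint p q (a # v) = (a mod q) * (p*q)^length v + (a div q) * q * (p*q)^length v + wint p q v"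
      by (simp only: distrib_right)
    have h: "last (a # v) = last v" "hd (a # v) = a" "length (a # v) - 1 = length v" using Cons by auto
    show ?thesis unfolding h w e IH[symmetric] by simp
  qed
qed


theorem lemma9:
  fixes p q k t :: nat and w1 w2 :: "nat list"
  assumes "p \<ge> 2" and "q \<ge> 2" and "coprime p q"
    and "k \<ge> 2" and "t > 0"
    and "word_over (p * q) k w1" and "word_over (p * q) k w2"
  shows "(wint p q w1 < q ^ t \<longrightarrow> wint p q (Gpq p q w1) < q ^ (t - 1))
       \<and> ([wint p q w2 = wint p q w1 + q ^ t] (mod ((p * q) ^ k)) \<longrightarrow>
          [wint p q (Gpq p q w2) = wint p q (Gpq p q w1) + q ^ (t - 1)] (mod ((p * q) ^ (k - 1))))"
proof -
  define n where "n = k - 1"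
  have kn: "k = Suc n" using assms(4) n_def by simp
  have l1: "length w1 = k" and l2: "length w2 = k" using assms(6,7) by (auto simp: word_over_def)
  have ne: "w1 \<noteq> []" "w2 \<noteq> []" using l1 l2 assms(4) by auto
  define G1 where "G1 = wint p q (Gpq p q w1)"
  define G2 where "G2 = wint p q (Gpq p q w2)"
  define X1 where "X1 = wint p q w1"
  define X2 where "X2 = wint p q w2"
  define r1 where "r1 = last w1 mod q"
  define r2 where "r2 = last w2 mod q"
  define h1 where "h1 = hd w1 div q"
  define h2 where "h2 = hd w2 div q"
  have k1: "q * G1 + r1 + h1 * q * (p*q)^n = X1"
    using key[OF ne(1), of q p] l1 kn unfolding G1_def r1_def h1_def X1_def by simp
  have k2: "q * G2 + r2 + h2 * q * (p*q)^n = X2"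
    using key[OF ne(2), of q p] l2 kn unfolding G2_def r2_def h2_def X2_def by simp
  have qt: "q ^ t = q * q ^ (t - 1)" using assms(5) by (cases t) auto
  have P1: "X1 < q ^ t \<longrightarrow> G1 < q ^ (t - 1)"
  proof
    assume "X1 < q ^ t"
    then have "q * G1 < q * q ^ (t - 1)" using k1 qt by linarith
    then show "G1 < q ^ (t - 1)" by simp
  qed
  have P2: "[X2 = X1 + q ^ t] (mod ((p * q) ^ k)) \<longrightarrow> [G2 = G1 + q ^ (t - 1)] (mod ((p * q) ^ n))"
  proof
    assume c: "[X2 = X1 + q ^ t] (mod ((p * q) ^ k))"
    have "q dvd (p*q)^k" using kn by simp
    then have "[X2 = X1 + q ^ t] (mod q)" using c cong_dvd_modulus_nat by blast
    then have "X2 mod q = (X1 + q ^ t) mod q" by (simp add: cong_def)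
    moreover have "X2 mod q = r2"
    proof -
      have "X2 = r2 + q * (G2 + h2 * (p*q)^n)" using k2 by (simp add: algebra_simps)
      moreover have "r2 < q" unfolding r2_def using assms(2) by simp
      ultimately show ?thesis by simp
    qed
    moreover have "(X1 + q^t) mod q = r1"
    proof -
      have "X1 + q^t = r1 + q * (G1 + h1 * (p*q)^n + q^(t-1))" using k1 qt by (simp add: algebra_simps)
      moreover have "r1 < q" unfolding r1_def using assms(2) by simp
      ultimately show ?thesis by simp
    qed
    ultimately have rr: "r1 = r2" by simp
    from c have "int ((p*q)^k) dvd int X2 - int (X1 + q ^ t)"
      using cong_int_iff cong_iff_dvd_diff by blast
    then obtain m where m: "int X2 - int (X1 + q ^ t) = int ((p*q)^k) * m" by (auto simp: dvd_def)
    define E where "E = int G2 - int G1 - int (q^(t-1))"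
    define N where "N = int ((p*q)^n)"
    have "int X2 - int (X1 + q ^ t) = int q * (E + N * (int h2 - int h1))"
    proof -
      have i1: "int X1 = int q * int G1 + int r1 + int h1 * int q * N"
        unfolding N_def using arg_cong[OF k1, of int] by simp
      have i2: "int X2 = int q * int G2 + int r1 + int h2 * int q * N"
        unfolding N_def using arg_cong[OF k2, of int] rr by simp
      have i3: "int (X1 + q^t) = int X1 + int q * int (q^(t-1))" using qt by simp
      show ?thesis unfolding i3 unfolding i1 i2 E_def by (simp add: algebra_simps)
    qed
    moreover have "int ((p*q)^k) = int q * (int p * N)" unfolding N_def using kn by simp
    ultimately have "int q * (E + N * (int h2 - int h1)) = int q * ((int p * N) * m)"
      using m by (simp add: mult.assoc)
    then have "E + N * (int h2 - int h1) = (int p * N) * m" using assms(2) by simp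
    then have "E = N * (int p * m - (int h2 - int h1))" by (simp add: algebra_simps)
    then have "N dvd E" by simp
    then have "N dvd int G2 - int (G1 + q^(t-1))" unfolding E_def by (simp add: diff_diff_eq)
    then show "[G2 = G1 + q ^ (t - 1)] (mod ((p * q) ^ n))"
      unfolding N_def using cong_int_iff cong_iff_dvd_diff by blast
  qed
  show ?thesis using P1 P2 unfolding G1_def G2_def X1_def X2_def n_def by simp
qed

end
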